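(* Let $K$ be a field of characteristic zero and $x$ a free variable. Let $\delta$ be an arbitrary $K$-derivation or an arbitrary $K$-$\mathcal{E}$-derivation of $K[x]$. Then the image $\operatorname{Im}\delta=\delta(K[x])$ is a Mathieu subspace of $K[x]$.
   Context: A $K$-derivation of a commutative $K$-algebra $\mathcal{A}$ is a $K$-linear map $D:\mathcal{A}\to\mathcal{A}$ with $D(ab)=D(a)b+aD(b)$. A $K$-$\mathcal{E}$-derivation of $\mathcal{A}$ is a $K$-linear map $\delta:\mathcal{A}\to\mathcal{A}$ with $\delta(ab)=\delta(a)b+a\delta(b)-\delta(a)\delta(b)$ for all $a,b$; equivalently $\delta=\mathrm{id}-\phi$ for some $K$-algebra endomorphism $\phi$ of $\mathcal{A}$. A $K$-subspace $V$ of a commutative $K$-algebra $\mathcal{A}$ is a Mathieu subspace (Mathieu–Zhao space) if for all $a,b\in\mathcal{A}$ with $a^m\in V$ for all $m\ge 1$, one has $a^mb\in V$ for all $m\gg 0$. *)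

theory Defs
  imports "HOL-Computational_Algebra.Polynomial"
begin

definition K_linear :: "('a::field poly \<Rightarrow> 'a poly) \<Rightarrow> bool" where
  "K_linear D \<longleftrightarrow> (\<forall>p q. D (p + q) = D p + D q) \<and> (\<forall>c p. D (smult c p) = smult c (D p))"

definition K_derivation :: "('a::field poly \<Rightarrow> 'a poly) \<Rightarrow> bool" where
  "K_derivation D \<longleftrightarrow> K_linear D \<and> (\<forall>a b. D (a * b) = D a * b + a * D b)"

definition K_E_derivation :: "('a::field poly \<Rightarrow> 'a poly) \<Rightarrow> bool" where
  "K_E_derivation d \<longleftrightarrow> K_linear d \<and>
     (\<forall>a b. d (a * b) = d a * b + a * d b - d a * d b)"

definition K_subspace :: "'a::field poly set \<Rightarrow> bool" where
  "K_subspace V \<longleftrightarrow> 0 \<in> V \<and> (\<forall>p\<in>V. \<forall>q\<in>V. p + q \<in> V) \<and> (\<forall>c. \<forall>p\<in>V. smult c p \<in> V)"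

definition Mathieu_subspace :: "'a::field poly set \<Rightarrow> bool" where
  "Mathieu_subspace V \<longleftrightarrow> K_subspace V \<and>
     (\<forall>a b. (\<forall>m::nat. m \<ge> 1 \<longrightarrow> a ^ m \<in> V) \<longrightarrow>
        (\<exists>N. \<forall>m\<ge>N. a ^ m * b \<in> V))"

end

theory Submission
  imports Defs
begin


lemma lin_add: "K_linear D \<Longrightarrow> D (p + q) = D p + D q"
  by (simp add: K_linear_def)
lemma lin_smult: "K_linear D \<Longrightarrow> D (smult c p) = smult c (D p)"
  by (simp add: K_linear_def)
lemma lin_0: "K_linear D \<Longrightarrow> D 0 = 0"
proof -
  assume "K_linear D"
  then have "D 0 = D 0 + D 0" using lin_add[of D 0 0] by simp
  then show ?thesis by (metis add_cancel_right_right)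
qed
lemma lin_diff: "K_linear D \<Longrightarrow> D (p - q) = D p - D q"
  using lin_add[of D "p - q" q] by simp
lemma lin_sum: "K_linear D \<Longrightarrow> D (sum f A) = (\<Sum>i\<in>A. D (f i))"
  by (induction A rule: infinite_finite_induct) (simp_all add: lin_0 lin_add)

lemma range_subspace: "K_linear D \<Longrightarrow> K_subspace (range D)"
  unfolding K_subspace_def
  by (auto simp: lin_0 lin_add[symmetric] lin_smult[symmetric] intro: range_eqI[of _ _ 0])

lemma mathieu_ideal_like:
  assumes "K_linear D" and "\<And>a b. a \<in> range D \<Longrightarrow> a * b \<in> range D"
  shows "Mathieu_subspace (range D)"
  unfolding Mathieu_subspace_def
proof (intro conjI allI impI)
  show "K_subspace (range D)" using assms(1) by (rule range_subspace)
  fix a b :: "'a poly" assume h: "\<forall>m::nat. m \<ge> 1 \<longrightarrow> a ^ m \<in> range D"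
  have "a \<in> range D" using h[rule_format, of 1] by simp
  show "\<exists>N. \<forall>m\<ge>N. a ^ m * b \<in> range D"
  proof (intro exI allI impI)
    fix m :: nat assume "m \<ge> 1"
    then obtain k where "m = Suc k" by (cases m) auto
    then have "a ^ m * b = a * (a ^ k * b)" by (simp add: mult.assoc)
    moreover have "a * (a ^ k * b) \<in> range D" using assms(2)[OF \<open>a \<in> range D\<close>, of "a ^ k * b"] .
    ultimately show "a ^ m * b \<in> range D" by (simp only:)
  qed
qed

lemma mathieu_zero_like:
  assumes "K_linear D" and "\<And>a. (\<forall>m::nat. m \<ge> 1 \<longrightarrow> a ^ m \<in> range D) \<Longrightarrow> a = 0"
  shows "Mathieu_subspace (range D)"
  unfolding Mathieu_subspace_def
proof (intro conjI allI impI)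
  show "K_subspace (range D)" using assms(1) by (rule range_subspace)
  fix a b :: "'a poly" assume h: "\<forall>m::nat. m \<ge> 1 \<longrightarrow> a ^ m \<in> range D"
  then have "a = 0" by (rule assms(2))
  show "\<exists>N. \<forall>m\<ge>N. a ^ m * b \<in> range D"
    by (rule exI[of _ 1]) (auto simp: \<open>a = 0\<close> power_0_left lin_0[OF assms(1)] intro: range_eqI[of _ _ 0])
qed

lemma der_1: "K_derivation D \<Longrightarrow> D 1 = 0"
  unfolding K_derivation_def using the_elem_eq by (metis mult_1 add_cancel_right_left add_left_cancel mult.right_neutral) 

lemma der_const: "K_derivation D \<Longrightarrow> D [:c:] = 0"
proof -
  assume d: "K_derivation D"
  have "D [:c:] = D (smult c 1)" by simp
  also have "\<dots> = smult c (D 1)" using d by (simp add: K_derivation_def lin_smult del: smult_one)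
  finally show ?thesis using der_1[OF d] by simp
qed

lemma der_formula: "K_derivation D \<Longrightarrow> D p = pderiv p * D [:0,1:]"
proof (induction p rule: pCons_induct)
  case 0 then show ?case by (simp add: K_derivation_def lin_0)
next
  case (pCons a p)
  have e: "pCons a p = [:a:] + [:0,1:] * p" by simp
  have "D (pCons a p) = D ([:a:] + [:0,1:] * p)" by (simp only: e[symmetric])
  also have "\<dots> = D [:a:] + D ([:0,1:] * p)"
    using pCons.prems by (simp only: K_derivation_def lin_add)
  also have "\<dots> = D [:a:] + (D [:0,1:] * p + [:0,1:] * D p)"
    using pCons.prems by (simp only: K_derivation_def)
  finally have "D (pCons a p) = D [:a:] + (D [:0,1:] * p + [:0,1:] * D p)" .
  also have "\<dots> = pderiv (pCons a p) * D [:0,1:]"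
    using pCons by (simp add: der_const pderiv_pCons algebra_simps)
  finally show ?case .
qed

lemma pderiv_sum: "pderiv (sum f A) = (\<Sum>i\<in>A. pderiv (f i))"
  by (induction A rule: infinite_finite_induct) (simp_all add: pderiv_add)

lemma antideriv: "\<exists>p. pderiv p = (q :: 'a::field_char_0 poly)"
proof -
  let ?p = "\<Sum>i\<le>degree q. monom (coeff q i / of_nat (Suc i)) (Suc i)"
  have "pderiv ?p = (\<Sum>i\<le>degree q. pderiv (monom (coeff q i / of_nat (Suc i)) (Suc i)))"
    by (rule pderiv_sum)
  also have "\<dots> = (\<Sum>i\<le>degree q. monom (coeff q i) i)"
    by (intro sum.cong refl) (simp add: pderiv_monom del: of_nat_Suc)
  also have "\<dots> = q" by (rule poly_as_sum_of_monoms)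
  finally show ?thesis by blast
qed



lemma pcompose_power_left: "pcompose (p ^ n) r = (pcompose p r) ^ n"
  by (induction n) (simp_all add: pcompose_mult pcompose_1)

lemma deg_le_coeff0: "degree (r::'a::field poly) \<le> e \<Longrightarrow> coeff r e = 0 \<Longrightarrow> r = 0 \<or> degree r < e"
  by (metis le_neq_implies_less leading_coeff_0_iff)

lemma E_linear: "K_linear (\<lambda>p. p - pcompose p g)"
  unfolding K_linear_def by (simp add: pcompose_add pcompose_smult smult_diff_right)

context
  fixes g :: "'a::field_char_0 poly"
  assumes dg: "degree g \<ge> 2"
begin

definition "EE p = p - pcompose p g"

lemma EE_const: "degree p = 0 \<Longrightarrow> EE p = 0"
  by (metis EE_def degree_0_id pcompose_const diff_self)

lemma EE_deg: "degree p \<ge> 1 \<Longrightarrow> degree (EE p) = degree g * degree p"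
proof -
  assume "degree p \<ge> 1"
  then have lt: "degree p < degree (pcompose p g)" using dg by (simp add: degree_pcompose)
  have "EE p = p + - pcompose p g" by (simp add: EE_def)
  then show ?thesis using degree_add_eq_right[of p "- pcompose p g"] lt
    by (simp add: degree_pcompose mult.commute)
qed

lemma range_EE: "f \<in> range EE \<Longrightarrow> f \<noteq> 0 \<Longrightarrow> degree f \<ge> 1 \<and> degree g dvd degree f"
proof -
  assume "f \<in> range EE" "f \<noteq> 0"
  then obtain p where p: "f = EE p" by auto
  then have "degree p \<ge> 1" using EE_const \<open>f \<noteq> 0\<close> by (metis One_nat_def Suc_leI neq0_conv)
  then show ?thesis using EE_deg p dg by (simp add: Suc_le_eq)
qed

lemma range_EE_p: "f = EE p \<Longrightarrow> f \<noteq> 0 \<Longrightarrow> degree f = degree g * degree p"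
  using EE_const EE_deg by (metis less_one not_le)

lemma EE_add: "EE p + EE q = EE (p + q)"
  by (simp add: EE_def pcompose_add)

lemma lemmaA:
  assumes a1: "a \<in> range EE" and a2: "a ^ 2 \<in> range EE"
  shows "\<exists>u. a = pcompose u g"
proof (rule ccontr)
  assume nex: "\<not> (\<exists>u. a = pcompose u g)"
  define P where "P n \<longleftrightarrow> (\<exists>u r. a = pcompose u g + r \<and> degree r = n)" for n
  have "P (degree a)" unfolding P_def by (rule exI[of _ 0], rule exI[of _ a]) simp
  then obtain n where Pn: "P n" and minn: "\<forall>m<n. \<not> P m" using exists_least_iff[of P] by blast
  then obtain u r where ur: "a = pcompose u g + r" and dr: "degree r = n" unfolding P_def by blast
  have r0: "r \<noteq> 0" using ur nex by auto
  define e where "e = degree r"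
  define d where "d = degree g"
  have d2: "d \<ge> 2" using dg d_def by simp
  have ndvd: "\<not> d dvd e"
  proof
    assume "d dvd e"
    then obtain j where j: "e = d * j" by auto
    define c where "c = lead_coeff r / lead_coeff g ^ j"
    have g0: "lead_coeff g \<noteq> 0" using dg by auto
    define r' where "r' = r - smult c (g ^ j)"
    have pm: "pcompose (monom c j) g = smult c (g ^ j)"
      by (simp add: monom_altdef pcompose_smult pcompose_power_left pcompose_pCons)
    have a': "a = pcompose (u + monom c j) g + r'"
      using ur by (simp add: r'_def pcompose_add pm)
    have dgj: "degree (smult c (g ^ j)) \<le> e" using j d_def
      by (simp add: degree_power_eq degree_smult_le) (metis degree_power_le degree_smult_le le_trans mult.commute)
    have "coeff (smult c (g ^ j)) e = c * lead_coeff g ^ j"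
    proof -
      have gnz: "g \<noteq> 0" using dg by auto
      have "degree (g ^ j) = e" using j d_def gnz by (simp add: degree_power_eq mult.commute)
      then show ?thesis by (simp add: lead_coeff_power[symmetric] del: lead_coeff_power)
    qed
    also have "\<dots> = lead_coeff r" using g0 by (simp add: c_def e_def)
    finally have "coeff r' e = 0" by (simp add: r'_def e_def)
    moreover have "degree r' \<le> e" unfolding r'_def e_def
      by (rule degree_diff_le) (use dgj e_def in simp_all)
    ultimately have "r' = 0 \<or> degree r' < e" by (rule deg_le_coeff0[rotated])
    then show False
    proof
      assume "r' = 0" then show False using a' nex by auto
    next
      assume "degree r' < e"
      then have "P (degree r')" unfolding P_def using a' by blast
      then show False using minn \<open>degree r' < e\<close> dr e_def by blast
    qed
  qed
  define A where "A = pcompose u g"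
  define k where "k = degree A"
  have kd: "k = d * degree u" unfolding k_def A_def d_def by (simp add: degree_pcompose mult.commute)
  have "k \<noteq> e" using ndvd kd by auto
  have e1: "e \<ge> 1" using ndvd by (metis dvd_0_right less_one not_le)
  show False
  proof (cases "e > k")
    case True
    then have "degree a = e" using ur e_def k_def A_def degree_add_eq_right by metis
    then have "a \<noteq> 0" using e1 by auto
    then have "d dvd e" using range_EE[OF a1] \<open>degree a = e\<close> d_def by simp
    then show False using ndvd by simp
  next
    case False
    then have ek: "e < k" using \<open>k \<noteq> e\<close> by simp
    then have A0: "A \<noteq> 0" unfolding k_def by auto
    define w where "w = smult 2 (A * r) + r ^ 2"
    have s2: "smult 2 (A * r) = A * r + A * r" by (metis mult_2 smult_add_left smult_1_left one_add_one)
    have aA: "a = A + r" using ur A_def by simp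
    have aw: "a ^ 2 = A ^ 2 + w" unfolding w_def s2 aA power2_eq_square
      by (simp add: algebra_simps)
    have dAr: "degree (smult 2 (A * r)) = k + e"
      using A0 r0 by (simp add: degree_mult_eq k_def e_def)
    have "degree (r ^ 2) = 2 * e" by (simp add: degree_power_eq r0 e_def)
    then have dw: "degree w = k + e" unfolding w_def using dAr ek
      by (simp add: degree_add_eq_left)
    have da: "degree a = k" using ur ek e_def k_def A_def degree_add_eq_left by metis
    then have "a \<noteq> 0" using ek by auto
    then have a20: "a ^ 2 \<noteq> 0" by simp
    obtain p where p: "a ^ 2 = EE p" using a2 by auto
    have "degree (a ^ 2) = 2 * k" using da by (simp add: degree_power_eq \<open>a \<noteq> 0\<close>)
    then have "2 * k = d * degree p" using range_EE_p[OF p a20] d_def by simp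
    moreover have "2 * degree p \<le> d * degree p" using d2 by (rule mult_le_mono1)
    ultimately have dp: "degree p \<le> k" by linarith
    have "pcompose (p + u ^ 2) g = pcompose p g + A ^ 2"
      by (simp add: pcompose_add pcompose_power_left A_def)
    also have "\<dots> = p - w"
    proof -
      have ep: "p - pcompose p g = A ^ 2 + w" using p aw by (simp only: EE_def)
      from ep have "pcompose p g = p - (A ^ 2 + w)" by (simp add: eq_diff_eq algebra_simps)
      then show ?thesis by simp
    qed
    finally have wp: "w - p = - pcompose (p + u ^ 2) g" by simp
    have "degree (- p) < degree w" using dw dp e1 by simp
    then have "degree (w + - p) = k + e" using dw by (simp only: degree_add_eq_left)
    then have "degree (w - p) = k + e" by simp
    then have "k + e = d * degree (p + u ^ 2)" using wp d_def
      by (simp add: degree_pcompose mult.commute)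
    then have "d dvd (k + e)" by simp
    then have "d dvd e" using kd by (simp add: dvd_add_right_iff)
    then show False using ndvd by simp
  qed
qed

lemma descent: "(\<forall>m::nat. m \<ge> 1 \<longrightarrow> a ^ m \<in> range EE) \<Longrightarrow> a = 0"
proof (induction "degree a" arbitrary: a rule: less_induct)
  case less
  have a1: "a \<in> range EE" using less.prems[rule_format, of 1] by simp
  have a2: "a ^ 2 \<in> range EE" using less.prems[rule_format, of 2] by simp
  obtain u where u: "a = pcompose u g" using lemmaA[OF a1 a2] by blast
  show ?case
  proof (cases "degree a = 0")
    case True
    then show ?thesis using range_EE[OF a1] by auto
  next
    case False
    have du: "degree a = degree u * degree g" using u by (simp add: degree_pcompose)
    then have "degree u > 0" using False by auto
    then have lt: "degree u < degree a" using du dg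
      by (metis One_nat_def Suc_1 Suc_le_lessD less_le_trans mult_less_cancel1 nat_mult_1_right mult.commute order_refl)
    have "\<forall>m::nat. m \<ge> 1 \<longrightarrow> u ^ m \<in> range EE"
    proof (intro allI impI)
      fix m :: nat assume "m \<ge> 1"
      obtain q where q: "a ^ m = EE q" using less.prems \<open>m \<ge> 1\<close> by blast
      have "u ^ m = EE (u ^ m) + a ^ m" by (simp add: EE_def u pcompose_power_left)
      also have "\<dots> = EE (u ^ m + q)" using q EE_add by simp
      finally show "u ^ m \<in> range EE" by simp
    qed
    then have "u = 0" using less.hyps lt by blast
    then show ?thesis using u by simp
  qed
qed

lemma EE_eq: "EE = (\<lambda>p. p - pcompose p g)"
  by (rule ext) (simp add: EE_def)

lemma descent2: "(\<forall>m::nat. m \<ge> 1 \<longrightarrow> a ^ m \<in> range (\<lambda>p. p - pcompose p g)) \<Longrightarrow> a = 0"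
  using descent[of a] unfolding EE_eq by simp

end



lemma pcompose_monom1: "pcompose (monom 1 k) g = g ^ k"
  by (simp add: monom_altdef pcompose_power_left pcompose_pCons)

lemma case_deg0:
  fixes g :: "'a::field_char_0 poly"
  assumes "degree g = 0"
  shows "Mathieu_subspace (range (\<lambda>p. p - pcompose p g))"
proof (rule mathieu_ideal_like[OF E_linear])
  define c where "c = coeff g 0"
  have g: "g = [:c:]" using degree_0_id[OF assms] c_def by simp
  fix a b :: "'a poly" assume "a \<in> range (\<lambda>p. p - pcompose p g)"
  then obtain p where p: "a = p - pcompose p g" by auto
  have "poly a c = 0" using p g by (simp add: pcompose_pCons_0)
  then have "pcompose (a * b) g = 0" using g by (simp add: pcompose_pCons_0)
  then have "a * b = (\<lambda>p. p - pcompose p g) (a * b)" by simp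
  then show "a * b \<in> range (\<lambda>p. p - pcompose p g)" by (rule range_eqI)
qed
lemma case_id:
  fixes g :: "'a::field_char_0 poly"
  assumes "g = [:0, 1:]"
  shows "Mathieu_subspace (range (\<lambda>p. p - pcompose p g))"
proof (rule mathieu_ideal_like[OF E_linear])
  fix a b :: "'a poly" assume "a \<in> range (\<lambda>p. p - pcompose p g)"
  then have "a = 0" using assms by auto
  then have "a * b = (\<lambda>p. p - pcompose p g) 0" by simp
  then show "a * b \<in> range (\<lambda>p. p - pcompose p g)" by (rule range_eqI)
qed

lemma coeff_lin_pow: "coeff ([:\<mu>, 1:] ^ Suc n) n = of_nat (Suc n) * (\<mu> :: 'a::comm_ring_1)"
proof (induction n)
  case 0 then show ?case by simp
next
  case (Suc n)
  have "[:\<mu>, 1:] ^ Suc (Suc n) = smult \<mu> ([:\<mu>, 1:] ^ Suc n) + pCons 0 ([:\<mu>, 1:] ^ Suc n)"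
    by (simp add: algebra_simps)
  then have "coeff ([:\<mu>, 1:] ^ Suc (Suc n)) (Suc n) = \<mu> * coeff ([:\<mu>, 1:] ^ Suc n) (Suc n) + coeff ([:\<mu>, 1:] ^ Suc n) n"
    by simp
  also have "\<dots> = \<mu> + of_nat (Suc n) * \<mu>" using Suc coeff_linear_power[of \<mu> "Suc n"] by simp
  finally show ?case by (simp add: algebra_simps)
qed

lemma case_shift:
  fixes \<mu> :: "'a::field_char_0"
  assumes mu: "\<mu> \<noteq> 0"
  shows "Mathieu_subspace (range (\<lambda>p. p - pcompose p [:\<mu>, 1:]))"
proof (rule mathieu_ideal_like[OF E_linear])
  let ?F = "\<lambda>p. p - pcompose p [:\<mu>, 1:]"
  define e where "e n = ?F (monom 1 (Suc n))" for n
  have e_eq: "e n = monom 1 (Suc n) - [:\<mu>, 1:] ^ Suc n" for n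
    by (simp add: e_def pcompose_monom1 del: power_Suc)
  have de: "degree (e n) \<le> n" for n
  proof -
    have "degree (e n) \<le> Suc n" unfolding e_eq
      by (rule degree_diff_le) (simp_all add: degree_monom_le degree_linear_power del: power_Suc)
    moreover have "coeff (e n) (Suc n) = 0" unfolding e_eq
      by (simp add: coeff_linear_power del: power_Suc)
    ultimately show ?thesis using deg_le_coeff0 by fastforce
  qed
  have ce: "coeff (e n) n = - (of_nat (Suc n) * \<mu>)" for n
    unfolding e_eq by (simp add: coeff_lin_pow del: power_Suc of_nat_Suc)
  have ce0: "coeff (e n) n \<noteq> 0" for n using ce mu by (simp del: of_nat_Suc)
  have all: "q \<in> range ?F" for q
  proof (induction "degree q" arbitrary: q rule: less_induct)
    case less
    show ?case
    proof (cases "q = 0")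
      case True
      then show ?thesis by (intro range_eqI[of _ _ 0]) simp
    next
      case False
      define n where "n = degree q"
      define q' where "q' = q - smult (lead_coeff q / coeff (e n) n) (e n)"
      have "degree q' \<le> n" unfolding q'_def
        by (rule degree_diff_le) (simp_all add: n_def, metis de degree_smult_le le_trans)
      moreover have "coeff q' n = 0" unfolding q'_def using ce0 by (simp add: n_def)
      ultimately have "q' = 0 \<or> degree q' < n" by (rule deg_le_coeff0)
      then have "q' \<in> range ?F"
        using less n_def by (metis (no_types, lifting) diff_zero pcompose_0 rangeI)
      then obtain p where p: "q' = ?F p" by auto
      define s where "s = lead_coeff q / coeff (e n) n"
      have "q = q' + smult s (e n)" by (simp add: q'_def s_def)
      also have "\<dots> = ?F (p + smult s (monom 1 (Suc n)))"
        using p by (simp add: e_def pcompose_add pcompose_smult smult_diff_right)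
      finally show ?thesis by (rule range_eqI)
    qed
  qed
  fix a b :: "'a poly"
  show "a * b \<in> range ?F" by (rule all)
qed



lemma factor_x: "(q::'a::field poly) \<noteq> 0 \<Longrightarrow> \<exists>j q'. q = monom 1 j * q' \<and> coeff q' 0 \<noteq> 0"
proof (induction q rule: pCons_induct)
  case 0 then show ?case by simp
next
  case (pCons a p)
  show ?case
  proof (cases "a = 0")
    case False
    then show ?thesis by (intro exI[of _ 0] exI[of _ "pCons a p"]) simp
  next
    case True
    then have "p \<noteq> 0" using pCons by auto
    then obtain j q' where "p = monom 1 j * q'" "coeff q' 0 \<noteq> 0" using pCons by blast
    then have "pCons a p = monom 1 (Suc j) * q'" using True by (simp add: monom_Suc)
    then show ?thesis using \<open>coeff q' 0 \<noteq> 0\<close> by blast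
  qed
qed

lemma case_lin:
  fixes l \<mu> :: "'a::field_char_0"
  assumes l0: "l \<noteq> 0" and l1: "l \<noteq> 1"
  shows "Mathieu_subspace (range (\<lambda>p. p - pcompose p [:\<mu>, l:]))"
proof -
  define F where "F = (\<lambda>p. p - pcompose p [:\<mu>, l:])"
  define c where "c = \<mu> / (1 - l)"
  have cfix: "\<mu> + l * c = c" using l1 by (simp add: c_def field_simps)
  define T where "T f = pcompose f [:c, 1:]" for f
  have h1: "pcompose [:\<mu>, l:] [:c, 1:] = [:c, l:]" using cfix by (simp add: pcompose_pCons)
  have h2: "pcompose [:c, 1:] [:0, l:] = [:c, l:]" by (simp add: pcompose_pCons)
  have key: "T (pcompose f [:\<mu>, l:]) = pcompose (T f) [:0, l:]" for f
    unfolding T_def by (simp add: pcompose_assoc[symmetric] h1 h2)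
  have cT: "coeff (T (F f)) n = (1 - l ^ n) * coeff (T f) n" for f n
    unfolding F_def T_def[of "f - _"] using key[of f]
    by (simp add: pcompose_diff T_def coeff_pcompose_linear algebra_simps)
  have Tinv: "pcompose (T f) [:-c, 1:] = f" for f
    unfolding T_def by (simp add: pcompose_assoc[symmetric] pcompose_pCons)
  have Tmult: "T (p * q) = T p * T q" for p q by (simp add: T_def pcompose_mult)
  have Tpow: "T (p ^ m) = T p ^ m" for p m by (simp add: T_def pcompose_power_left)
  show ?thesis
  proof (cases "\<exists>r\<ge>1. l ^ r = 1")
    case True
    then obtain r where r1: "r \<ge> 1" and lr: "l ^ r = 1" by blast
    show ?thesis unfolding F_def[symmetric]
    proof (rule mathieu_zero_like)
      show "K_linear F" unfolding F_def by (rule E_linear)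
      fix a assume h: "\<forall>m::nat. m \<ge> 1 \<longrightarrow> a ^ m \<in> range F"
      show "a = 0"
      proof (rule ccontr)
        assume "a \<noteq> 0"
        then have "T a \<noteq> 0" using Tinv[of a] by (auto simp: T_def)
        then obtain j q' where jq: "T a = monom 1 j * q'" and q0: "coeff q' 0 \<noteq> 0"
          using factor_x by blast
        have "T (a ^ r) = monom 1 (j * r) * q' ^ r"
          using jq by (simp add: Tpow power_mult_distrib monom_power)
        then have "coeff (T (a ^ r)) (j * r) = coeff q' 0 ^ r"
          by (simp add: coeff_monom_mult coeff_0_power)
        then have nz: "coeff (T (a ^ r)) (j * r) \<noteq> 0" using q0 by simp
        obtain p where "a ^ r = F p" using h r1 by blast
        then have "coeff (T (a ^ r)) (j * r) = (1 - l ^ (j * r)) * coeff (T p) (j * r)"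
          using cT by simp
        also have "l ^ (j * r) = 1" using lr by (simp add: power_mult mult.commute[of j r])
        finally show False using nz by simp
      qed
    qed
  next
    case False
    then have ln: "l ^ n \<noteq> 1" if "n \<ge> 1" for n using that by blast
    have char: "f \<in> range F" if "coeff (T f) 0 = 0" for f
    proof -
      define N where "N = degree (T f)"
      define h where "h = (\<Sum>i\<le>N. monom (coeff (T f) i / (1 - l ^ i)) i)"
      have ch: "coeff h n = (if n \<le> N then coeff (T f) n / (1 - l ^ n) else 0)" for n
        unfolding h_def by (simp add: coeff_sum coeff_monom)
      define p where "p = pcompose h [:-c, 1:]"
      have Tp: "T p = h" unfolding p_def T_def
        by (simp add: pcompose_assoc[symmetric] pcompose_pCons)
      have "T (F p) = T f"
      proof (rule poly_eqI)
        fix n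
        show "coeff (T (F p)) n = coeff (T f) n"
        proof (cases "n = 0")
          case True then show ?thesis using that by (simp add: cT)
        next
          case False
          then have "1 - l ^ n \<noteq> 0" using ln by simp
          then show ?thesis using cT[of p n] Tp ch[of n] coeff_eq_0[of "T f" n] N_def
            by (auto simp: not_le)
        qed
      qed
      then have "F p = f" using Tinv by metis
      then show ?thesis by (rule range_eqI[OF sym])
    qed
    have inr: "coeff (T f) 0 = 0" if "f \<in> range F" for f
      using that cT[of _ 0] by auto
    show ?thesis unfolding F_def[symmetric]
    proof (rule mathieu_ideal_like)
      show "K_linear F" unfolding F_def by (rule E_linear)
      fix a b assume "a \<in> range F"
      then have "coeff (T a) 0 = 0" by (rule inr)
      then have "coeff (T (a * b)) 0 = 0" by (simp add: Tmult coeff_mult_0)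
      then show "a * b \<in> range F" by (rule char)
    qed
  qed
qed



lemma comp_all:
  fixes g :: "'a::field_char_0 poly"
  shows "Mathieu_subspace (range (\<lambda>p. p - pcompose p g))"
proof -
  consider "degree g = 0" | "degree g = 1" | "degree g \<ge> 2" by linarith
  then show ?thesis
  proof cases
    case 1 then show ?thesis by (rule case_deg0)
  next
    case 3
    show ?thesis
      by (rule mathieu_zero_like[OF E_linear]) (rule descent2[OF 3], assumption)
  next
    case 2
    define \<mu> where "\<mu> = coeff g 0"
    define l where "l = coeff g 1"
    have l0: "l \<noteq> 0" using 2 l_def by (metis leading_coeff_0_iff zero_neq_one degree_0)
    have g: "g = [:\<mu>, l:]"
    proof (rule poly_eqI)
      fix n show "coeff g n = coeff [:\<mu>, l:] n"
      proof (cases n)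
        case 0 then show ?thesis by (simp add: \<mu>_def)
      next
        case (Suc m)
        then show ?thesis
        proof (cases m)
          case 0 then show ?thesis using Suc by (simp add: l_def)
        next
          case (Suc k)
          then have "coeff g n = 0" using \<open>n = Suc m\<close> 2 by (simp add: coeff_eq_0)
          then show ?thesis using Suc \<open>n = Suc m\<close> by simp
        qed
      qed
    qed
    show ?thesis
    proof (cases "l = 1")
      case True
      show ?thesis
      proof (cases "\<mu> = 0")
        case True
        then show ?thesis using g \<open>l = 1\<close> by (intro case_id) simp
      next
        case False
        then show ?thesis using g \<open>l = 1\<close> case_shift by simp
      qed
    next
      case False
      then show ?thesis using g case_lin l0 by simp
    qed
  qed
qed

lemma E_case:
  fixes \<delta> :: "'a::field_char_0 poly \<Rightarrow> 'a poly"
  assumes E: "K_E_derivation \<delta>"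
  shows "Mathieu_subspace (range \<delta>)"
proof -
  have lin: "K_linear \<delta>" using E by (simp add: K_E_derivation_def)
  have rule: "\<delta> (a * b) = \<delta> a * b + a * \<delta> b - \<delta> a * \<delta> b" for a b
    using E by (simp add: K_E_derivation_def)
  define \<phi> where "\<phi> p = p - \<delta> p" for p
  have phim: "\<phi> (a * b) = \<phi> a * \<phi> b" for a b
    unfolding \<phi>_def rule by (simp add: algebra_simps)
  have phia: "\<phi> (a + b) = \<phi> a + \<phi> b" for a b
    unfolding \<phi>_def by (simp add: lin_add[OF lin])
  have phis: "\<phi> (smult c a) = smult c (\<phi> a)" for c a
    unfolding \<phi>_def by (simp add: lin_smult[OF lin] smult_diff_right)
  have "\<phi> 1 * (\<phi> 1 - 1) = 0" using phim[of 1 1] by (simp add: algebra_simps)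
  then have "\<phi> 1 = 0 \<or> \<phi> 1 = 1" by simp
  then show ?thesis
  proof
    assume p0: "\<phi> 1 = 0"
    have "\<delta> p = p" for p using phim[of p 1] p0 by (simp add: \<phi>_def)
    then show ?thesis
      by (intro mathieu_ideal_like[OF lin]) (metis rangeI)
  next
    assume p1: "\<phi> 1 = 1"
    define g where "g = \<phi> [:0, 1:]"
    have pc: "\<phi> [:a:] = [:a:]" for a
      using phis[of a 1] p1 by simp
    have "\<phi> p = pcompose p g" for p
    proof (induction p rule: pCons_induct)
      case 0 then show ?case using phis[of 0 1] by simp
    next
      case (pCons a p)
      have "pCons a p = [:a:] + [:0, 1:] * p" by simp
      then have "\<phi> (pCons a p) = \<phi> [:a:] + \<phi> [:0, 1:] * \<phi> p"
        by (metis phia phim)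
      then show ?case using pCons by (simp add: pc g_def pcompose_pCons)
    qed
    then have e: "p - \<delta> p = pcompose p g" for p by (simp add: \<phi>_def)
    have "\<delta> p = p - pcompose p g" for p
    proof -
      have "\<delta> p = p - (p - \<delta> p)" by simp
      then show ?thesis by (simp only: e)
    qed
    then have "\<delta> = (\<lambda>p. p - pcompose p g)" by (intro ext)
    then show ?thesis using comp_all by simp
  qed
qed

lemma D_case:
  fixes D :: "'a::field_char_0 poly \<Rightarrow> 'a poly"
  assumes d: "K_derivation D"
  shows "Mathieu_subspace (range D)"
proof (rule mathieu_ideal_like)
  show lin: "K_linear D" using d by (simp add: K_derivation_def)
  fix a b assume "a \<in> range D"
  then obtain p where p: "a = D p" by auto
  obtain P where P: "pderiv P = pderiv p * b" using antideriv by blast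
  have "D P = a * b" using p P der_formula[OF d, of P] der_formula[OF d, of p] by (simp add: algebra_simps)
  then show "a * b \<in> range D" by (rule range_eqI[OF sym])
qed

theorem theorem1p5:
  fixes \<delta> :: "'a::field_char_0 poly \<Rightarrow> 'a poly"
  assumes "K_derivation \<delta> \<or> K_E_derivation \<delta>"
  shows "Mathieu_subspace (range \<delta>)"
  using assms D_case E_case by blast

end
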